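(* There exists a $2$-regular curve in $\mathbb{E}^4$ which does not admit a generalized Bishop frame of type F.
   Context: A regular curve $\gamma: I\to\mathbb{E}^4$ ($I$ an open interval) is considered with arc-length parametrization; $\mathbb{T}=\gamma'$ is its unit tangent vector. It is $2$-regular if $\mathbb{T}'$ is nowhere vanishing. A frame on $\gamma$ is an ordered orthonormal frame $(\mathbb{T},\mathbb{Z}_1,\mathbb{Z}_2,\mathbb{Z}_3)$ of smooth vector fields along $\gamma$ whose first vector is $\mathbb{T}$; it is identified with the smooth map $\mathbb{Z}: I\to O(4)$ whose rows are these vectors. Its coefficient matrix is the $\mathfrak{o}(4)$-valued function $X$ with $\mathbb{Z}'=X\mathbb{Z}$. A frame is of type F if, after possibly permuting $\mathbb{Z}_1,\mathbb{Z}_2,\mathbb{Z}_3$ (keeping $\mathbb{T}$ first), its coefficient matrix has the form $\begin{pmatrix}0&x_1&0&0\\-x_1&0&x_2&0\\0&-x_2&0&x_3\\0&0&-x_3&0\end{pmatrix}$ for some smooth functions $x_1,x_2,x_3$ (no sign conditions). *)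

theory Defs
  imports "HOL-Analysis.Analysis"
begin

definition smooth_on :: "real set \<Rightarrow> (real \<Rightarrow> 'a::real_normed_vector) \<Rightarrow> bool" where
  "smooth_on S f \<longleftrightarrow> (\<exists>D :: nat \<Rightarrow> real \<Rightarrow> 'a.
      (\<forall>t\<in>S. D 0 t = f t) \<and>
      (\<forall>n. \<forall>t\<in>S. (D n has_vector_derivative D (Suc n) t) (at t)))"

definition open_interval :: "real set \<Rightarrow> bool" where
  "open_interval I \<longleftrightarrow> open I \<and> is_interval I \<and> I \<noteq> {}"

definition unit_speed_curve :: "real set \<Rightarrow> (real \<Rightarrow> real^4) \<Rightarrow> bool" where
  "unit_speed_curve I \<gamma> \<longleftrightarrow> open_interval I \<and> smooth_on I \<gamma> \<and>
     (\<forall>t\<in>I. norm (vector_derivative \<gamma> (at t)) = 1)"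

definition tangent :: "(real \<Rightarrow> real^4) \<Rightarrow> real \<Rightarrow> real^4" where
  "tangent \<gamma> t = vector_derivative \<gamma> (at t)"

definition two_regular :: "real set \<Rightarrow> (real \<Rightarrow> real^4) \<Rightarrow> bool" where
  "two_regular I \<gamma> \<longleftrightarrow> unit_speed_curve I \<gamma> \<and>
     (\<forall>t\<in>I. vector_derivative (tangent \<gamma>) (at t) \<noteq> 0)"

definition is_frame :: "real set \<Rightarrow> (real \<Rightarrow> real^4) \<Rightarrow> (nat \<Rightarrow> real \<Rightarrow> real^4) \<Rightarrow> bool" where
  "is_frame I \<gamma> Z \<longleftrightarrow>
     (\<forall>t\<in>I. Z 0 t = tangent \<gamma> t) \<and>
     (\<forall>i<4. smooth_on I (Z i)) \<and>
     (\<forall>t\<in>I. \<forall>i<4. \<forall>j<4. inner (Z i t) (Z j t) = (if i = j then 1 else 0))"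

text \<open>X is the coefficient matrix of Z: Z' = X Z, i.e. row i of Z' equals
  sum_j X_ij (row j of Z).\<close>
definition coeff_matrix :: "real set \<Rightarrow> (nat \<Rightarrow> real \<Rightarrow> real^4) \<Rightarrow> (real \<Rightarrow> nat \<Rightarrow> nat \<Rightarrow> real) \<Rightarrow> bool" where
  "coeff_matrix I Z X \<longleftrightarrow>
     (\<forall>t\<in>I. \<forall>i<4. (Z i has_vector_derivative (\<Sum>j<4. X t i j *\<^sub>R Z j t)) (at t))"

definition F_matrix :: "real \<Rightarrow> real \<Rightarrow> real \<Rightarrow> nat \<Rightarrow> nat \<Rightarrow> real" where
  "F_matrix x1 x2 x3 i j =
     (if i = 0 \<and> j = 1 then x1 else if i = 1 \<and> j = 0 then - x1
      else if i = 1 \<and> j = 2 then x2 else if i = 2 \<and> j = 1 then - x2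
      else if i = 2 \<and> j = 3 then x3 else if i = 3 \<and> j = 2 then - x3
      else 0)"

text \<open>Frame of type F: after permuting Z1,Z2,Z3 (T stays first), the coefficient
  matrix has the F form for some smooth x1, x2, x3 (no sign conditions).\<close>
definition frame_type_F :: "real set \<Rightarrow> (real \<Rightarrow> real^4) \<Rightarrow> (nat \<Rightarrow> real \<Rightarrow> real^4) \<Rightarrow> bool" where
  "frame_type_F I \<gamma> Z \<longleftrightarrow> is_frame I \<gamma> Z \<and>
     (\<exists>\<sigma> x1 x2 x3. \<sigma> permutes {1,2,3} \<and>
        smooth_on I x1 \<and> smooth_on I x2 \<and> smooth_on I x3 \<and>
        coeff_matrix I (\<lambda>i. Z (\<sigma> i)) (\<lambda>t. F_matrix (x1 t) (x2 t) (x3 t)))"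

end

theory Submission
  imports Defs
begin

lemma smooth_on_coinduct:
  fixes f :: "real \<Rightarrow> 'a::real_normed_vector"
  assumes "P f"
    and step: "\<And>g. P g \<Longrightarrow> \<exists>g'. P g' \<and> (\<forall>t\<in>S. (g has_vector_derivative g' t) (at t))"
  shows "smooth_on S f"
proof -
  define der where "der g = (SOME g'. P g' \<and> (\<forall>t\<in>S. (g has_vector_derivative g' t) (at t)))" for g
  have der: "P (der g) \<and> (\<forall>t\<in>S. (g has_vector_derivative der g t) (at t))" if "P g" for g
    unfolding der_def using someI_ex[OF step[OF that]] .
  define D where "D n = (der ^^ n) f" for n
  have PD: "P (D n)" for n
    by (induction n) (auto simp: D_def assms der)
  show ?thesis unfolding smooth_on_def
    by (rule exI[of _ D]) (auto simp: D_def der PD[unfolded D_def])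
qed

lemma smooth_on_UNIV_D:
  fixes f :: "real \<Rightarrow> 'a::real_normed_vector"
  assumes "smooth_on UNIV f"
  shows "\<exists>f'. smooth_on UNIV f' \<and> (\<forall>t. (f has_vector_derivative f' t) (at t))"
proof -
  obtain D where D0: "\<And>t. D 0 t = f t" and DS: "\<And>n t. (D n has_vector_derivative D (Suc n) t) (at t)"
    using assms unfolding smooth_on_def by blast
  have f: "f = D 0" using D0 by auto
  have "smooth_on UNIV (D 1)" unfolding smooth_on_def
    using DS by (intro exI[of _ "\<lambda>n. D (Suc n)"]) auto
  then show ?thesis using DS f by auto
qed

definition sm :: "(real \<Rightarrow> real) \<Rightarrow> bool" where "sm f \<longleftrightarrow> smooth_on UNIV f"

lemma sm_D: "sm f \<Longrightarrow> \<exists>f'. sm f' \<and> (\<forall>t. (f has_real_derivative f' t) (at t))"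
  unfolding sm_def has_real_derivative_iff_has_vector_derivative by (rule smooth_on_UNIV_D)

lemma sm_coinduct:
  assumes "P f"
    and step: "\<And>g. P g \<Longrightarrow> \<exists>g'. P g' \<and> (\<forall>t. (g has_real_derivative g' t) (at t))"
  shows "sm f"
  unfolding sm_def
  by (rule smooth_on_coinduct[of P]) (use assms in \<open>auto simp: has_real_derivative_iff_has_vector_derivative\<close>)

lemma sm_I: "sm f' \<Longrightarrow> (\<And>t. (f has_real_derivative f' t) (at t)) \<Longrightarrow> sm f"
  by (rule sm_coinduct[of "\<lambda>g. g = f \<or> sm g"]) (auto dest: sm_D)

lemma sm_const: "sm (\<lambda>t. c)"
  by (rule sm_coinduct[of "\<lambda>g. \<exists>c. g = (\<lambda>t. c)"]) (auto intro!: exI derivative_eq_intros)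

lemma sm_id: "sm (\<lambda>t. t)"
  by (rule sm_I[OF sm_const]) (auto intro!: derivative_eq_intros)

lemma sm_add: "sm f \<Longrightarrow> sm g \<Longrightarrow> sm (\<lambda>t. f t + g t)"
proof (rule sm_coinduct[of "\<lambda>h. \<exists>f g. sm f \<and> sm g \<and> h = (\<lambda>t. f t + g t)"])
  fix h assume "\<exists>f g. sm f \<and> sm g \<and> h = (\<lambda>t. f t + g t)"
  then obtain f g where "sm f" "sm g" "h = (\<lambda>t. f t + g t)" by blast
  moreover obtain f' where "sm f'" "\<And>t. (f has_real_derivative f' t) (at t)" using sm_D[OF \<open>sm f\<close>] by blast
  moreover obtain g' where "sm g'" "\<And>t. (g has_real_derivative g' t) (at t)" using sm_D[OF \<open>sm g\<close>] by blast
  ultimately show "\<exists>h'. (\<exists>f g. sm f \<and> sm g \<and> h' = (\<lambda>t. f t + g t)) \<and> (\<forall>t. (h has_real_derivative h' t) (at t))"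
    by (intro exI[of _ "\<lambda>t. f' t + g' t"] conjI exI[of _ f'] exI[of _ g'])
       (auto intro!: derivative_eq_intros)
qed auto

lemma Suc_choose': "Suc n choose k = (n choose k) + (if k = 0 then 0 else (n choose (k-1)))"
  by (cases k) simp_all

lemma sm_mult: 
  assumes "sm f" "sm g" shows "sm (\<lambda>t. f t * g t)"
proof -
  obtain Df where Df0: "\<And>t. Df 0 t = f t" and Df: "\<And>n t. (Df n has_real_derivative Df (Suc n) t) (at t)"
    using assms(1) unfolding sm_def smooth_on_def has_real_derivative_iff_has_vector_derivative by blast
  obtain Dg where Dg0: "\<And>t. Dg 0 t = g t" and Dg: "\<And>n t. (Dg n has_real_derivative Dg (Suc n) t) (at t)"
    using assms(2) unfolding sm_def smooth_on_def has_real_derivative_iff_has_vector_derivative by blast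
  define D where "D n t = (\<Sum>i = 0..n. of_nat (n choose i) * Df i t * Dg (n-i) t)" for n t
  have "(D n has_real_derivative D (Suc n) t) (at t)" for n t
  proof -
    have sumeq: "(\<Sum>i = 0..n.
               of_nat (n choose i) * (Df (Suc i) t * Dg (n-i) t + Dg (Suc (n-i)) t * Df i t)) =
            Dg 0 t * Df (Suc n) t + (\<Sum>i = 0..n. Df i t * (of_nat (Suc n choose i) * Dg (Suc n - i) t))"
      apply (simp add: Suc_choose' algebra_simps sum.distrib)
      apply (subst (4) sum_Suc_reindex)
      apply (auto simp: algebra_simps Suc_diff_le intro: sum.cong)
      done
    show ?thesis
      unfolding D_def
      apply (rule derivative_eq_intros Df Dg | simp)+
      using sumeq by (simp add: algebra_simps)
  qed
  then show ?thesis unfolding sm_def smooth_on_def has_real_derivative_iff_has_vector_derivative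
    by (intro exI[of _ D]) (auto simp: D_def Df0 Dg0)
qed

lemma sm_cmult: "sm f \<Longrightarrow> sm (\<lambda>t. c * f t)"
  using sm_mult[OF sm_const] .

lemma sm_diff: "sm f \<Longrightarrow> sm g \<Longrightarrow> sm (\<lambda>t. f t - g t)"
  using sm_add[OF _ sm_cmult[of g "-1"], of f] by simp

lemma sm_sincos:
  assumes h: "sm h"
  shows "sm (\<lambda>t. sin (h t))" "sm (\<lambda>t. cos (h t))"
proof -
  obtain h' where h': "sm h'" "\<And>t. (h has_real_derivative h' t) (at t)" using sm_D[OF h] by blast
  let ?P = "\<lambda>g. \<exists>a b. sm a \<and> sm b \<and> g = (\<lambda>t. a t * sin (h t) + b t * cos (h t))"
  have step: "\<exists>g'. ?P g' \<and> (\<forall>t. (g has_real_derivative g' t) (at t))" if Pg: "?P g" for g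
  proof -
    obtain a b where ab: "sm a" "sm b" "g = (\<lambda>t. a t * sin (h t) + b t * cos (h t))" using Pg by blast
    obtain a' where a': "sm a'" "\<And>t. (a has_real_derivative a' t) (at t)" using sm_D[OF ab(1)] by blast
    obtain b' where b': "sm b'" "\<And>t. (b has_real_derivative b' t) (at t)" using sm_D[OF ab(2)] by blast
    let ?g' = "\<lambda>t. (a' t - b t * h' t) * sin (h t) + (a t * h' t + b' t) * cos (h t)"
    have "?P ?g'"
      using ab a' b' h' by (intro exI[of _ "\<lambda>t. a' t - b t * h' t"] exI[of _ "\<lambda>t. a t * h' t + b' t"]) 
        (auto intro!: sm_diff sm_add sm_mult)
    moreover have "(g has_real_derivative ?g' t) (at t)" for t
      unfolding ab(3) using ab a' b' h'
      by (auto intro!: derivative_eq_intros simp: algebra_simps)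
    ultimately show ?thesis by blast
  qed
  have "?P (\<lambda>t. sin (h t))" by (intro exI[of _ "\<lambda>t. 1"] exI[of _ "\<lambda>t. 0"]) (auto simp: sm_const)
  then show "sm (\<lambda>t. sin (h t))" by (rule sm_coinduct[of ?P, OF _ step])
  have "?P (\<lambda>t. cos (h t))" by (intro exI[of _ "\<lambda>t. 0"] exI[of _ "\<lambda>t. 1"]) (auto simp: sm_const)
  then show "sm (\<lambda>t. cos (h t))" by (rule sm_coinduct[of ?P, OF _ step])
qed

lemma sm_reflect:
  assumes "sm f" shows "sm (\<lambda>t. f (- t))"
proof (rule sm_coinduct[of "\<lambda>g. \<exists>f. sm f \<and> g = (\<lambda>t. f (- t))"])
  fix g assume "\<exists>f. sm f \<and> g = (\<lambda>t. f (- t))"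
  then obtain f where f: "sm f" "g = (\<lambda>t. f (- t))" by blast
  obtain f' where f': "sm f'" "\<And>t. (f has_real_derivative f' t) (at t)" using sm_D[OF f(1)] by blast
  have "(g has_real_derivative (- f' (- t))) (at t)" for t
  proof -
    have "((\<lambda>t. f (- t)) has_real_derivative f' (-t) * (-1)) (at t)"
      by (rule DERIV_chain2[OF f'(2)]) (auto intro!: derivative_eq_intros)
    then show ?thesis by (simp add: f(2))
  qed
  then show "\<exists>g'. (\<exists>f. sm f \<and> g' = (\<lambda>t. f (- t))) \<and> (\<forall>t. (g has_real_derivative g' t) (at t))"
    using sm_cmult[OF f'(1), of "-1"]
    by (intro exI[of _ "\<lambda>t. - f' (- t)"] conjI exI[of _ "\<lambda>t. - f' t"]) auto
qed (use assms in auto)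

definition psi :: "real \<Rightarrow> real" where "psi t = (if t > 0 then exp (- 1 / t) else 0)"

lemma poly_exp_lim: "((\<lambda>x. poly p x * exp (- x)) \<longlongrightarrow> (0::real)) at_top"
proof -
  have "((\<lambda>x. \<Sum>i\<le>degree p. coeff p i * (x ^ i / exp x)) \<longlongrightarrow> (\<Sum>i\<le>degree p. coeff p i * 0)) at_top"
    by (intro tendsto_sum tendsto_mult tendsto_const tendsto_power_div_exp_0)
  then show ?thesis
    by (simp add: poly_altdef sum_distrib_right exp_minus field_simps sum_divide_distrib)
qed

lemma poly_exp_lim0: "((\<lambda>t. poly p (1 / t) * exp (- 1 / t)) \<longlongrightarrow> (0::real)) (at_right 0)"
proof -
  have "filterlim (\<lambda>t::real. 1 / t) at_top (at_right 0)"
    using filterlim_inverse_at_top_right by (simp add: inverse_eq_divide)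
  from filterlim_compose[OF poly_exp_lim this, of p] show ?thesis by (simp add: o_def)
qed

lemma psi_step:
  "((\<lambda>t. if t > 0 then poly p (1 / t) * exp (- 1 / t) else 0) has_real_derivative
      (if t > 0 then poly ([:0,0,1:] * (p - pderiv p)) (1 / t) * exp (- 1 / t) else 0)) (at t)"
proof (cases "t > 0")
  case True
  have "((\<lambda>t. poly p (1 / t) * exp (- 1 / t)) has_real_derivative
      poly ([:0,0,1:] * (p - pderiv p)) (1 / t) * exp (- 1 / t)) (at t)"
  proof -
    have d1: "((\<lambda>t. poly p (1/t)) has_real_derivative poly (pderiv p) (1/t) * (-(1/t^2))) (at t)"
      by (rule DERIV_chain2[OF poly_DERIV]) (use True in \<open>auto intro!: derivative_eq_intros simp: power2_eq_square\<close>)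
    have d2: "((\<lambda>t. exp (- 1 / t)) has_real_derivative exp (- 1 / t) * (1/t^2)) (at t)"
      by (rule DERIV_chain2[OF DERIV_exp]) (use True in \<open>auto intro!: derivative_eq_intros simp: power2_eq_square\<close>)
    have "((\<lambda>t. poly p (1 / t) * exp (- 1 / t)) has_real_derivative
       poly (pderiv p) (1/t) * (-(1/t^2)) * exp (- 1 / t) + exp (- 1 / t) * (1/t^2) * poly p (1/t)) (at t)"
      by (rule DERIV_mult[OF d1 d2])
    moreover have "poly (pderiv p) (1/t) * (-(1/t^2)) * exp (- 1 / t) + exp (- 1 / t) * (1/t^2) * poly p (1/t)
       = poly ([:0,0,1:] * (p - pderiv p)) (1 / t) * exp (- 1 / t)"
      by (simp add: algebra_simps power2_eq_square)
    ultimately show ?thesis by simp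
  qed
  then have "((\<lambda>t. if t > 0 then poly p (1 / t) * exp (- 1 / t) else 0) has_real_derivative
      poly ([:0,0,1:] * (p - pderiv p)) (1 / t) * exp (- 1 / t)) (at t)"
    by (rule has_field_derivative_transform_within_open[where S="{0<..}"]) (use True in auto)
  then show ?thesis using True by simp
next
  case False
  show ?thesis
  proof (cases "t < 0")
    case True
    have "((\<lambda>t. 0) has_real_derivative 0) (at t)" by simp
    then have "((\<lambda>t. if t > 0 then poly p (1 / t) * exp (- 1 / t) else 0) has_real_derivative 0) (at t)"
      by (rule has_field_derivative_transform_within_open[where S="{..<0}"]) (use True in auto)
    then show ?thesis using True by simp
  next
    case False
    then have t0: "t = 0" using \<open>\<not> t > 0\<close> by simp
    let ?g = "\<lambda>t. if t > 0 then poly p (1 / t) * exp (- 1 / t) else 0"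
    have "((\<lambda>y. (?g y - ?g 0) / (y - 0)) \<longlongrightarrow> 0) (at 0)"
    proof (rule filterlim_split_at_real)
      show "((\<lambda>y. (?g y - ?g 0) / (y - 0)) \<longlongrightarrow> 0) (at_left 0)"
        by (rule tendsto_eventually, rule eventually_mono[OF eventually_at_left_real[of "-1" "0::real"]]) auto
      have "((\<lambda>y. poly (pCons 0 p) (1 / y) * exp (- 1 / y)) \<longlongrightarrow> 0) (at_right 0)"
        by (rule poly_exp_lim0)
      then show "((\<lambda>y. (?g y - ?g 0) / (y - 0)) \<longlongrightarrow> 0) (at_right 0)"
        apply (rule Lim_transform_eventually)
        by (rule eventually_mono[OF eventually_at_right_real[of 0 "1::real"]]) (auto simp: field_simps)
    qed
    then show ?thesis using t0 by (simp add: has_field_derivative_iff)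
  qed
qed

lemma sm_psi: "sm psi"
proof (rule sm_coinduct[of "\<lambda>g. \<exists>p::real poly. g = (\<lambda>t. if t > 0 then poly p (1 / t) * exp (- 1 / t) else 0)"])
  show "\<exists>p::real poly. psi = (\<lambda>t. if t > 0 then poly p (1 / t) * exp (- 1 / t) else 0)"
    by (rule exI[of _ 1]) (auto simp: psi_def)
next
  fix g :: "real \<Rightarrow> real" assume "\<exists>p::real poly. g = (\<lambda>t. if t > 0 then poly p (1 / t) * exp (- 1 / t) else 0)"
  then obtain p :: "real poly" where "g = (\<lambda>t. if t > 0 then poly p (1 / t) * exp (- 1 / t) else 0)" by blast
  then show "\<exists>g'. (\<exists>p::real poly. g' = (\<lambda>t. if t > 0 then poly p (1 / t) * exp (- 1 / t) else 0)) \<and>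
             (\<forall>t. (g has_real_derivative g' t) (at t))"
    using psi_step[of p] by blast
qed

definition mk4 :: "real \<Rightarrow> real \<Rightarrow> real \<Rightarrow> real \<Rightarrow> real^4" where
 "mk4 a b c d = (\<chi> i. if i = 1 then a else if i = 2 then b else if i = 3 then c else d)"

lemma mk4_nth[simp]: "mk4 a b c d $ 1 = a" "mk4 a b c d $ 2 = b" "mk4 a b c d $ 3 = c" "mk4 a b c d $ 4 = d"
  by (simp_all add: mk4_def)

lemma mk4_alt: "mk4 a b c d = a *\<^sub>R axis 1 1 + b *\<^sub>R axis 2 1 + c *\<^sub>R axis 3 1 + d *\<^sub>R axis 4 1"
  by (simp add: vec_eq_iff forall_4 axis_def)

lemma inner4: "inner (x::real^4) y = x$1 * y$1 + x$2 * y$2 + x$3 * y$3 + x$4 * y$4"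
  by (simp add: inner_vec_def sum_4)

lemma vd_comp:
  assumes "(f has_vector_derivative f') (at s)"
  shows "((\<lambda>s. f s $ i) has_real_derivative f' $ i) (at s)"
proof -
  have "((\<lambda>x. f x $ i) has_derivative (\<lambda>x. (x *\<^sub>R f') $ i)) (at s)"
    using bounded_linear.has_derivative[OF bounded_linear_vec_nth assms[unfolded has_vector_derivative_def]] .
  moreover have "(\<lambda>x. (x *\<^sub>R f') $ i) = (*) (f' $ i)" by (auto simp: fun_eq_iff)
  ultimately show ?thesis unfolding has_field_derivative_def by simp
qed

lemma vd_mk4:
  assumes "(a has_real_derivative a') (at s)" "(b has_real_derivative b') (at s)"
    "(c has_real_derivative c') (at s)" "(d has_real_derivative d') (at s)"
  shows "((\<lambda>s. mk4 (a s) (b s) (c s) (d s)) has_vector_derivative mk4 a' b' c' d') (at s)"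
  unfolding mk4_alt
  using assms by (auto intro!: derivative_eq_intros)

lemma smooth_mk4:
  assumes "sm a" "sm b" "sm c" "sm d"
  shows "smooth_on UNIV (\<lambda>s. mk4 (a s) (b s) (c s) (d s))"
proof -
  obtain Da where Da0: "\<And>t. Da 0 t = a t" and Da: "\<And>n t. (Da n has_real_derivative Da (Suc n) t) (at t)"
    using assms(1) unfolding sm_def smooth_on_def has_real_derivative_iff_has_vector_derivative by blast
  obtain Db where Db0: "\<And>t. Db 0 t = b t" and Db: "\<And>n t. (Db n has_real_derivative Db (Suc n) t) (at t)"
    using assms(2) unfolding sm_def smooth_on_def has_real_derivative_iff_has_vector_derivative by blast
  obtain Dc where Dc0: "\<And>t. Dc 0 t = c t" and Dc: "\<And>n t. (Dc n has_real_derivative Dc (Suc n) t) (at t)"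
    using assms(3) unfolding sm_def smooth_on_def has_real_derivative_iff_has_vector_derivative by blast
  obtain Dd where Dd0: "\<And>t. Dd 0 t = d t" and Dd: "\<And>n t. (Dd n has_real_derivative Dd (Suc n) t) (at t)"
    using assms(4) unfolding sm_def smooth_on_def has_real_derivative_iff_has_vector_derivative by blast
  show ?thesis unfolding smooth_on_def
    by (intro exI[of _ "\<lambda>n s. mk4 (Da n s) (Db n s) (Dc n s) (Dd n s)"])
      (auto simp: Da0 Db0 Dc0 Dd0 intro!: vd_mk4 Da Db Dc Dd)
qed

lemma psi_nonneg: "0 \<le> psi t" and psi_lt1: "psi t < 1"
  by (auto simp: psi_def)

lemma psi_neg: "t \<le> 0 \<Longrightarrow> psi t = 0"
  by (auto simp: psi_def)

definition hh :: "real \<Rightarrow> real" where "hh t = psi t"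
definition kk :: "real \<Rightarrow> real" where "kk t = psi (- t)"
definition mm :: "real \<Rightarrow> real" where "mm t = hh t + kk t"
definition Tc :: "real \<Rightarrow> real^4" where
  "Tc s = mk4 (cos s * cos (mm s)) (sin s * cos (mm s)) (sin (hh s)) (sin (kk s))"
definition gam :: "real \<Rightarrow> real^4" where "gam t = integral {-1..t} Tc"
definition I0 :: "real set" where "I0 = {-1<..<1}"

lemma sm_hh: "sm hh" and sm_kk: "sm kk" and sm_mm: "sm mm"
proof -
  show "sm hh" unfolding hh_def[abs_def] by (rule sm_psi)
  show "sm kk" unfolding kk_def[abs_def] by (rule sm_reflect[OF sm_psi])
  then show "sm mm" unfolding mm_def[abs_def] using sm_add \<open>sm hh\<close> by blast
qed

lemma smooth_Tc: "smooth_on UNIV Tc"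
  unfolding Tc_def[abs_def]
  by (intro smooth_mk4 sm_mult sm_sincos sm_id sm_hh sm_kk sm_mm)

lemma hk_cases: "(hh s = 0 \<and> mm s = kk s) \<or> (kk s = 0 \<and> mm s = hh s)"
  by (cases "s > 0") (auto simp: hh_def kk_def mm_def psi_neg)

lemma mm_bounds: "0 \<le> mm s" "mm s < 1"
  using hk_cases[of s] psi_nonneg[of s] psi_nonneg[of "-s"] psi_lt1[of s] psi_lt1[of "-s"]
  by (auto simp: hh_def kk_def)

lemma trig4: "(sin b)\<^sup>2 + ((cos a)\<^sup>2 * (cos b)\<^sup>2 + (sin a)\<^sup>2 * (cos b)\<^sup>2) = (1::real)"
  using sin_cos_squared_add[of a] sin_cos_squared_add[of b] by algebra

lemma norm_Tc: "norm (Tc s) = 1"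
proof -
  have "inner (Tc s) (Tc s) = 1"
    using hk_cases[of s]
    by (auto simp: inner4 Tc_def algebra_simps power2_eq_square[symmetric]
        simp flip: distrib_left intro: trig4)
  then show ?thesis by (simp add: norm_eq_sqrt_inner)
qed

lemma Tc_deriv_ex: "\<exists>Tc'. \<forall>s. (Tc has_vector_derivative Tc' s) (at s) \<and> Tc' s \<noteq> 0"
proof -
  obtain DT where DT0: "\<And>t. DT 0 t = Tc t" and DT: "\<And>n t. (DT n has_vector_derivative DT (Suc n) t) (at t)"
    using smooth_Tc unfolding smooth_on_def by blast
  have Tc_eq: "Tc = DT 0" using DT0 by auto
  obtain mm' where mm': "\<And>t. (mm has_real_derivative mm' t) (at t)" using sm_D[OF sm_mm] by blast
  have d: "(Tc has_vector_derivative DT 1 s) (at s)" for s using DT[of 0 s] Tc_eq by simp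
  have "DT 1 s \<noteq> 0" for s
  proof
    assume z: "DT 1 s = 0"
    have c1: "((\<lambda>s. cos s * cos (mm s)) has_real_derivative DT 1 s $ 1) (at s)"
      using vd_comp[OF d, of 1] by (simp add: Tc_def)
    have c1': "((\<lambda>s. cos s * cos (mm s)) has_real_derivative - sin s * cos (mm s) - cos s * sin (mm s) * mm' s) (at s)"
      by (auto intro!: derivative_eq_intros mm' simp: algebra_simps)
    have c2: "((\<lambda>s. sin s * cos (mm s)) has_real_derivative DT 1 s $ 2) (at s)"
      using vd_comp[OF d, of 2] by (simp add: Tc_def)
    have c2': "((\<lambda>s. sin s * cos (mm s)) has_real_derivative cos s * cos (mm s) - sin s * sin (mm s) * mm' s) (at s)"
      by (auto intro!: derivative_eq_intros mm' simp: algebra_simps)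
    have e1: "- sin s * cos (mm s) - cos s * sin (mm s) * mm' s = 0" using DERIV_unique[OF c1 c1'] z by simp
    have e2: "cos s * cos (mm s) - sin s * sin (mm s) * mm' s = 0" using DERIV_unique[OF c2 c2'] z by simp
    have "cos (mm s) = - sin s * (- sin s * cos (mm s) - cos s * sin (mm s) * mm' s) + cos s * (cos s * cos (mm s) - sin s * sin (mm s) * mm' s)"
      using sin_cos_squared_add[of s] by algebra
    then have "cos (mm s) = 0" using e1 e2 by simp
    moreover have "cos (mm s) > 0"
      using mm_bounds[of s] pi_gt3 by (intro cos_gt_zero_pi) auto
    ultimately show False by simp
  qed
  then show ?thesis using d by blast
qed

lemma Tc_cont: "continuous_on S Tc"
proof -
  obtain Tc' where "\<And>s. (Tc has_vector_derivative Tc' s) (at s)" using Tc_deriv_ex by blast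
  then show ?thesis
    by (intro continuous_at_imp_continuous_on ballI has_vector_derivative_continuous) blast
qed

lemma gam_deriv: "t \<in> I0 \<Longrightarrow> (gam has_vector_derivative Tc t) (at t)"
proof -
  assume t: "t \<in> I0"
  have "(gam has_vector_derivative Tc t) (at t within {-1..1})"
    unfolding gam_def[abs_def] using t
    by (intro integral_has_vector_derivative Tc_cont) (auto simp: I0_def)
  moreover have "at t within {-1..1} = at t"
    using t by (intro at_within_interior) (auto simp: I0_def)
  ultimately show ?thesis by simp
qed

lemma tangent_gam: "t \<in> I0 \<Longrightarrow> tangent gam t = Tc t"
  unfolding tangent_def using gam_deriv by (simp add: vector_derivative_at)

lemma open_I0: "open I0" by (simp add: I0_def)

lemma two_regular_gam: "two_regular I0 gam"
proof -
  obtain DT where DT0: "\<And>t. DT 0 t = Tc t" and DT: "\<And>n t. (DT n has_vector_derivative DT (Suc n) t) (at t)"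
    using smooth_Tc unfolding smooth_on_def by blast
  have "smooth_on I0 gam"
    unfolding smooth_on_def
    apply (rule exI[of _ "\<lambda>n. case n of 0 \<Rightarrow> gam | Suc m \<Rightarrow> DT m"])
    apply (auto split: nat.split simp: DT)
    using gam_deriv DT0 by metis
  moreover have "open_interval I0"
    by (auto simp: open_interval_def I0_def is_interval_oo intro!: exI[of _ 0])
  moreover have "norm (vector_derivative gam (at t)) = 1" if "t \<in> I0" for t
    using tangent_gam[OF that] norm_Tc by (simp add: tangent_def)
  moreover have "vector_derivative (tangent gam) (at t) \<noteq> 0" if t: "t \<in> I0" for t
  proof -
    obtain Tc' where Tc': "\<And>s. (Tc has_vector_derivative Tc' s) (at s) \<and> Tc' s \<noteq> 0" using Tc_deriv_ex by blast
    have "(tangent gam has_vector_derivative Tc' t) (at t)"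
      by (rule has_vector_derivative_transform_within_open[OF _ open_I0 t])
        (use Tc' tangent_gam in auto)
    then show ?thesis using Tc' by (simp add: vector_derivative_at)
  qed
  ultimately show ?thesis unfolding two_regular_def unit_speed_curve_def by blast
qed

definition A0 :: "real \<Rightarrow> real \<Rightarrow> real" where "A0 j s = cos s * cos j"
definition B0 :: "real \<Rightarrow> real \<Rightarrow> real" where "B0 j s = sin s * cos j"
definition C0 :: "real \<Rightarrow> real" where "C0 j = sin j"
definition A1 :: "real \<Rightarrow> real \<Rightarrow> real \<Rightarrow> real" where "A1 j j1 s = - sin s * cos j - cos s * sin j * j1"
definition B1 :: "real \<Rightarrow> real \<Rightarrow> real \<Rightarrow> real" where "B1 j j1 s = cos s * cos j - sin s * sin j * j1"
definition C1 :: "real \<Rightarrow> real \<Rightarrow> real" where "C1 j j1 = cos j * j1"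
definition A2 :: "real \<Rightarrow> real \<Rightarrow> real \<Rightarrow> real \<Rightarrow> real" where "A2 j j1 j2 s = - cos s * cos j + 2 * sin s * sin j * j1 - cos s * cos j * j1^2 - cos s * sin j * j2"
definition B2 :: "real \<Rightarrow> real \<Rightarrow> real \<Rightarrow> real \<Rightarrow> real" where "B2 j j1 j2 s = - sin s * cos j - 2 * cos s * sin j * j1 - sin s * cos j * j1^2 - sin s * sin j * j2"
definition C2 :: "real \<Rightarrow> real \<Rightarrow> real \<Rightarrow> real" where "C2 j j1 j2 = - sin j * j1^2 + cos j * j2"

lemma indep:
  assumes "0 < j" "j < 1" "0 \<le> j2"
    and eA: "A2 j j1 j2 s = a * A1 j j1 s + b * A0 j s"
    and eB: "B2 j j1 j2 s = a * B1 j j1 s + b * B0 j s"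
    and eC: "C2 j j1 j2 = a * C1 j j1 + b * C0 j"
  shows False
proof -
  define c where "c = cos j"
  define q where "q = sin j"
  have c: "c > 0" unfolding c_def by (rule cos_gt_zero_pi) (use assms pi_gt3 in auto)
  have q: "q > 0" unfolding q_def by (rule sin_gt_zero) (use assms pi_gt3 in auto)
  have cq: "c^2 + q^2 = 1" unfolding c_def q_def by simp
  have ss: "(sin s)^2 + (cos s)^2 = 1" by simp
  have U: "- c - c * j1^2 - q * j2 = a * (- q * j1) + b * c"
  proof -
    have "cos s * (A2 j j1 j2 s) + sin s * (B2 j j1 j2 s) = cos s * (a * A1 j j1 s + b * A0 j s) + sin s * (a * B1 j j1 s + b * B0 j s)"
      using eA eB by simp
    then show ?thesis
      unfolding A2_def B2_def A1_def B1_def A0_def B0_def c_def[symmetric] q_def[symmetric]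
      using ss by algebra
  qed
  have V: "- 2 * q * j1 = a * c"
  proof -
    have "- sin s * (A2 j j1 j2 s) + cos s * (B2 j j1 j2 s) = - sin s * (a * A1 j j1 s + b * A0 j s) + cos s * (a * B1 j j1 s + b * B0 j s)"
      using eA eB by simp
    then show ?thesis
      unfolding A2_def B2_def A1_def B1_def A0_def B0_def c_def[symmetric] q_def[symmetric]
      using ss by algebra
  qed
  have W: "- q * j1^2 + c * j2 = a * c * j1 + b * q"
    using eC unfolding C2_def C1_def C0_def c_def[symmetric] q_def[symmetric] by (simp add: algebra_simps)
  have "a * j1 = q * c + j2"
    using U W cq by algebra
  then have "c * (q * c + j2) = - 2 * q * j1^2"
    using V by algebra
  moreover have "c * (q * c + j2) > 0" using c q assms(3) by (intro mult_pos_pos add_pos_nonneg) auto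
  moreover have "- 2 * q * j1^2 \<le> 0" using q by simp
  ultimately show False by linarith
qed

lemma derivs_block:
  assumes j: "(j has_real_derivative j1 s) (at s)" and j1: "(j1 has_real_derivative j2 s) (at s)"
  shows "((\<lambda>s. A0 (j s) s) has_real_derivative A1 (j s) (j1 s) s) (at s)"
    "((\<lambda>s. B0 (j s) s) has_real_derivative B1 (j s) (j1 s) s) (at s)"
    "((\<lambda>s. C0 (j s)) has_real_derivative C1 (j s) (j1 s)) (at s)"
    "((\<lambda>s. A1 (j s) (j1 s) s) has_real_derivative A2 (j s) (j1 s) (j2 s) s) (at s)"
    "((\<lambda>s. B1 (j s) (j1 s) s) has_real_derivative B2 (j s) (j1 s) (j2 s) s) (at s)"
    "((\<lambda>s. C1 (j s) (j1 s)) has_real_derivative C2 (j s) (j1 s) (j2 s)) (at s)"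
  unfolding A0_def B0_def C0_def A1_def B1_def C1_def A2_def B2_def C2_def
  by (auto intro!: derivative_eq_intros j j1 simp: algebra_simps power2_eq_square)

definition jl :: "real \<Rightarrow> real" where "jl s = exp (1 / s)"
definition jl1 :: "real \<Rightarrow> real" where "jl1 s = - exp (1 / s) / s^2"
definition jl2 :: "real \<Rightarrow> real" where "jl2 s = exp (1 / s) * (1 / s^4 + 2 / s^3)"
definition jr :: "real \<Rightarrow> real" where "jr s = exp (- 1 / s)"
definition jr1 :: "real \<Rightarrow> real" where "jr1 s = exp (- 1 / s) / s^2"
definition jr2 :: "real \<Rightarrow> real" where "jr2 s = exp (- 1 / s) * (1 / s^4 - 2 / s^3)"

lemma jl_derivs: "s \<noteq> 0 \<Longrightarrow> (jl has_real_derivative jl1 s) (at s)"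
  "s \<noteq> 0 \<Longrightarrow> (jl1 has_real_derivative jl2 s) (at s)"
  unfolding jl_def[abs_def] jl1_def[abs_def] jl2_def
  by (auto intro!: derivative_eq_intros simp: field_simps power2_eq_square eval_nat_numeral)

lemma jr_derivs: "s \<noteq> 0 \<Longrightarrow> (jr has_real_derivative jr1 s) (at s)"
  "s \<noteq> 0 \<Longrightarrow> (jr1 has_real_derivative jr2 s) (at s)"
  unfolding jr_def[abs_def] jr1_def[abs_def] jr2_def
  by (auto intro!: derivative_eq_intros simp: field_simps power2_eq_square eval_nat_numeral)

lemma jl_props: "-1/2 < s \<Longrightarrow> s < 0 \<Longrightarrow> 0 < jl s \<and> jl s < 1 \<and> 0 \<le> jl2 s"
proof -
  assume s: "-1/2 < s" "s < 0"
  have "1 / s^4 + 2 / s^3 = (1 + 2 * s) / s^4" using s by (simp add: field_simps eval_nat_numeral)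
  moreover have "(1 + 2 * s) / s^4 \<ge> 0" using s by (intro divide_nonneg_pos) auto
  ultimately show ?thesis using s by (auto simp: jl_def jl2_def)
qed

lemma jr_props: "0 < s \<Longrightarrow> s < 1/2 \<Longrightarrow> 0 < jr s \<and> jr s < 1 \<and> 0 \<le> jr2 s"
proof -
  assume s: "0 < s" "s < 1/2"
  have "1 / s^4 - 2 / s^3 = (1 - 2 * s) / s^4" using s by (simp add: field_simps eval_nat_numeral)
  moreover have "(1 - 2 * s) / s^4 \<ge> 0" using s by (intro divide_nonneg_pos) auto
  ultimately show ?thesis using s by (auto simp: jr_def jr2_def)
qed

lemma Tc_left: "s < 0 \<Longrightarrow> Tc s = mk4 (A0 (jl s) s) (B0 (jl s) s) 0 (C0 (jl s))"
  by (simp add: Tc_def A0_def B0_def C0_def mm_def hh_def kk_def psi_def jl_def)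

lemma Tc_right: "0 < s \<Longrightarrow> Tc s = mk4 (A0 (jr s) s) (B0 (jr s) s) (C0 (jr s)) 0"
  by (simp add: Tc_def A0_def B0_def C0_def mm_def hh_def kk_def psi_def jr_def)

lemma Tc_zero: "Tc 0 = mk4 1 0 0 0"
  by (simp add: Tc_def mm_def hh_def kk_def psi_def)

lemma comp_step:
  fixes Z1 Z2 :: "real \<Rightarrow> real^4" and x1 x2 x1' F F1 F2 :: "real \<Rightarrow> real"
  assumes J: "open J" "J \<subseteq> I0" "s \<in> J"
    and dT: "\<forall>t\<in>I0. (Tc has_vector_derivative x1 t *\<^sub>R Z1 t) (at t)"
    and dZ1: "\<forall>t\<in>I0. (Z1 has_vector_derivative (- x1 t) *\<^sub>R Tc t + x2 t *\<^sub>R Z2 t) (at t)"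
    and dx1: "\<forall>t\<in>I0. (x1 has_real_derivative x1' t) (at t)"
    and F: "\<forall>t\<in>J. Tc t $ i = F t" and F1: "\<forall>t\<in>J. (F has_real_derivative F1 t) (at t)"
    and F2: "\<forall>t\<in>J. (F1 has_real_derivative F2 t) (at t)"
  shows "F1 s = x1 s * Z1 s $ i" "F2 s = x1' s * Z1 s $ i + x1 s * (- x1 s * F s + x2 s * Z2 s $ i)"
proof -
  have e1: "F1 t = x1 t * Z1 t $ i" if t: "t \<in> J" for t
  proof -
    have a: "((\<lambda>s. Tc s $ i) has_real_derivative x1 t * Z1 t $ i) (at t)"
      using vd_comp[OF dT[rule_format, of t], of i] t J by auto
    have b: "((\<lambda>s. Tc s $ i) has_real_derivative F1 t) (at t)"
      by (rule has_field_derivative_transform_within_open[OF F1[rule_format, OF t] J(1) t]) (use F in auto)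
    show ?thesis using DERIV_unique[OF a b] by simp
  qed
  then show "F1 s = x1 s * Z1 s $ i" using J by simp
  have sI: "s \<in> I0" using J by auto
  have c: "((\<lambda>t. x1 t * Z1 t $ i) has_real_derivative
      x1' s * Z1 s $ i + x1 s * (((- x1 s) *\<^sub>R Tc s + x2 s *\<^sub>R Z2 s) $ i)) (at s)"
    using dx1[rule_format, OF sI] vd_comp[OF dZ1[rule_format, OF sI], of i]
    by (auto intro!: derivative_eq_intros)
  have d: "((\<lambda>t. x1 t * Z1 t $ i) has_real_derivative F2 s) (at s)"
    by (rule has_field_derivative_transform_within_open[OF F2[rule_format, OF J(3)] J(1) J(3)]) (use e1 in auto)
  show "F2 s = x1' s * Z1 s $ i + x1 s * (- x1 s * F s + x2 s * Z2 s $ i)"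
    using DERIV_unique[OF d c] F J by simp
qed

lemma side:
  fixes Z1 Z2 :: "real \<Rightarrow> real^4" and x1 x2 x1' g gb gc :: "real \<Rightarrow> real" and p q :: 4
  assumes J: "open J" "J \<subseteq> I0"
    and dT: "\<forall>t\<in>I0. (Tc has_vector_derivative x1 t *\<^sub>R Z1 t) (at t)"
    and dZ1: "\<forall>t\<in>I0. (Z1 has_vector_derivative (- x1 t) *\<^sub>R Tc t + x2 t *\<^sub>R Z2 t) (at t)"
    and dx1: "\<forall>t\<in>I0. (x1 has_real_derivative x1' t) (at t)"
    and x1nz: "\<forall>t\<in>I0. x1 t \<noteq> 0"
    and T1: "\<forall>t\<in>J. Tc t $ 1 = A0 (g t) t" and T2: "\<forall>t\<in>J. Tc t $ 2 = B0 (g t) t"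
    and Tp: "\<forall>t\<in>J. Tc t $ p = C0 (g t)" and Tq: "\<forall>t\<in>J. Tc t $ q = 0"
    and dj: "\<forall>t\<in>J. (g has_real_derivative gb t) (at t)" and dj1: "\<forall>t\<in>J. (gb has_real_derivative gc t) (at t)"
    and jp: "\<forall>t\<in>J. 0 < g t \<and> g t < 1 \<and> 0 \<le> gc t"
    and s: "s \<in> J"
  shows "Z1 s $ q = 0 \<and> Z2 s $ q = 0"
proof -
  have sI: "s \<in> I0" using s J by auto
  note cs = comp_step[OF J _ dT dZ1 dx1]
  have q: "0 = x1 s * Z1 s $ q" "0 = x1' s * Z1 s $ q + x1 s * (- x1 s * 0 + x2 s * Z2 s $ q)"
    using cs[of s q "\<lambda>_. 0" "\<lambda>_. 0" "\<lambda>_. 0"] s Tq by auto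
  have z1: "Z1 s $ q = 0" using q(1) x1nz sI by simp
  have x2z: "x2 s * Z2 s $ q = 0" using q(2) z1 x1nz sI by simp
  have x2nz: "x2 s \<noteq> 0"
  proof
    assume x2: "x2 s = 0"
    have dA: "\<forall>t\<in>J. ((\<lambda>s. A0 (g s) s) has_real_derivative A1 (g t) (gb t) t) (at t)"
      "\<forall>t\<in>J. ((\<lambda>s. A1 (g s) (gb s) s) has_real_derivative A2 (g t) (gb t) (gc t) t) (at t)"
      "\<forall>t\<in>J. ((\<lambda>s. B0 (g s) s) has_real_derivative B1 (g t) (gb t) t) (at t)"
      "\<forall>t\<in>J. ((\<lambda>s. B1 (g s) (gb s) s) has_real_derivative B2 (g t) (gb t) (gc t) t) (at t)"
      "\<forall>t\<in>J. ((\<lambda>s. C0 (g s)) has_real_derivative C1 (g t) (gb t)) (at t)"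
      "\<forall>t\<in>J. ((\<lambda>s. C1 (g s) (gb s)) has_real_derivative C2 (g t) (gb t) (gc t)) (at t)"
      using dj dj1 by (auto intro!: derivs_block)
    have a: "A1 (g s) (gb s) s = x1 s * Z1 s $ 1"
      "A2 (g s) (gb s) (gc s) s = x1' s * Z1 s $ 1 + x1 s * (- x1 s * A0 (g s) s + x2 s * Z2 s $ 1)"
      using cs[OF s, of 1 "\<lambda>t. A0 (g t) t" "\<lambda>t. A1 (g t) (gb t) t" "\<lambda>t. A2 (g t) (gb t) (gc t) t"] T1 dA by auto
    have b: "B1 (g s) (gb s) s = x1 s * Z1 s $ 2"
      "B2 (g s) (gb s) (gc s) s = x1' s * Z1 s $ 2 + x1 s * (- x1 s * B0 (g s) s + x2 s * Z2 s $ 2)"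
      using cs[OF s, of 2 "\<lambda>t. B0 (g t) t" "\<lambda>t. B1 (g t) (gb t) t" "\<lambda>t. B2 (g t) (gb t) (gc t) t"] T2 dA by auto
    have c: "C1 (g s) (gb s) = x1 s * Z1 s $ p"
      "C2 (g s) (gb s) (gc s) = x1' s * Z1 s $ p + x1 s * (- x1 s * C0 (g s) + x2 s * Z2 s $ p)"
      using cs[OF s, of p "\<lambda>t. C0 (g t)" "\<lambda>t. C1 (g t) (gb t)" "\<lambda>t. C2 (g t) (gb t) (gc t)"] Tp dA by auto
    have nz: "x1 s \<noteq> 0" using x1nz sI by simp
    define a' where "a' = x1' s / x1 s"
    define b' where "b' = - (x1 s * x1 s)"
    have "A2 (g s) (gb s) (gc s) s = a' * A1 (g s) (gb s) s + b' * A0 (g s) s"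
      using a x2 nz by (simp add: a'_def b'_def field_simps power2_eq_square)
    moreover have "B2 (g s) (gb s) (gc s) s = a' * B1 (g s) (gb s) s + b' * B0 (g s) s"
      using b x2 nz by (simp add: a'_def b'_def field_simps power2_eq_square)
    moreover have "C2 (g s) (gb s) (gc s) = a' * C1 (g s) (gb s) + b' * C0 (g s)"
      using c x2 nz by (simp add: a'_def b'_def field_simps power2_eq_square)
    ultimately show False using indep jp s by blast
  qed
  show ?thesis using z1 x2z x2nz by simp
qed

lemma lim_left0:
  fixes f :: "real \<Rightarrow> real"
  assumes "isCont f 0" "a < 0" "\<forall>s\<in>{a<..<0}. f s = 0"
  shows "f 0 = 0"
proof -
  have "(f \<longlongrightarrow> f 0) (at_left 0)" using assms(1) by (simp add: isCont_def filterlim_at_split)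
  moreover have "(f \<longlongrightarrow> 0) (at_left 0)"
    by (rule tendsto_eventually, rule eventually_mono[OF eventually_at_left_real[OF assms(2)]]) (use assms(3) in auto)
  ultimately show ?thesis using tendsto_unique[OF trivial_limit_at_left_real] by blast
qed

lemma lim_right0:
  fixes f :: "real \<Rightarrow> real"
  assumes "isCont f 0" "0 < a" "\<forall>s\<in>{0<..<a}. f s = 0"
  shows "f 0 = 0"
proof -
  have "(f \<longlongrightarrow> f 0) (at_right 0)" using assms(1) by (simp add: isCont_def filterlim_at_split)
  moreover have "(f \<longlongrightarrow> 0) (at_right 0)"
    by (rule tendsto_eventually, rule eventually_mono[OF eventually_at_right_real[OF assms(2)]]) (use assms(3) in auto)
  ultimately show ?thesis using tendsto_unique[OF trivial_limit_at_right_real] by blast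
qed

lemma F_row0: "(\<Sum>j<4. F_matrix a b c 0 j *\<^sub>R (V j :: real^4)) = a *\<^sub>R V 1"
  by (simp add: F_matrix_def eval_nat_numeral)
lemma F_row1: "(\<Sum>j<4. F_matrix a b c 1 j *\<^sub>R (V j :: real^4)) = (- a) *\<^sub>R V 0 + b *\<^sub>R V 2"
  by (simp add: F_matrix_def eval_nat_numeral)

theorem theorem3:
  shows "\<exists>(I :: real set) (\<gamma> :: real \<Rightarrow> real^4).
           two_regular I \<gamma> \<and> \<not> (\<exists>Z. frame_type_F I \<gamma> Z)"
proof (intro exI conjI)
  show "two_regular I0 gam" by (rule two_regular_gam)
  show "\<not> (\<exists>Z. frame_type_F I0 gam Z)"
  proof
    assume "\<exists>Z. frame_type_F I0 gam Z"
    then obtain Z \<sigma> x1 x2 x3 where fr: "is_frame I0 gam Z" and perm: "\<sigma> permutes {1,2,3}"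
      and sx1: "smooth_on I0 x1"
      and cm: "coeff_matrix I0 (\<lambda>i. Z (\<sigma> i)) (\<lambda>t. F_matrix (x1 t) (x2 t) (x3 t))"
      unfolding frame_type_F_def by blast
    have s0: "\<sigma> 0 = 0" using permutes_not_in[OF perm] by auto
    have s1: "\<sigma> 1 \<in> {1,2,3}" "\<sigma> 2 \<in> {1,2,3}" using permutes_in_image[OF perm] by auto
    have s12: "\<sigma> 1 \<noteq> \<sigma> 2" proof
      assume "\<sigma> 1 = \<sigma> 2"
      then have "(1::nat) = 2" using permutes_inj[OF perm] by (meson inj_eq)
      then show False by simp
    qed
    define Z1 where "Z1 = Z (\<sigma> 1)"
    define Z2 where "Z2 = Z (\<sigma> 2)"
    have Z0: "\<forall>t\<in>I0. Z 0 t = Tc t" using fr tangent_gam unfolding is_frame_def by auto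
    have row: "\<forall>t\<in>I0. \<forall>i<4. (Z (\<sigma> i) has_vector_derivative (\<Sum>j<4. F_matrix (x1 t) (x2 t) (x3 t) i j *\<^sub>R Z (\<sigma> j) t)) (at t)"
      using cm unfolding coeff_matrix_def by blast
    have dZ0: "\<forall>t\<in>I0. (Z 0 has_vector_derivative x1 t *\<^sub>R Z1 t) (at t)"
      using row s0 F_row0 unfolding Z1_def by (metis zero_less_numeral)
    have dT: "\<forall>t\<in>I0. (Tc has_vector_derivative x1 t *\<^sub>R Z1 t) (at t)"
    proof
      fix t assume t: "t \<in> I0"
      show "(Tc has_vector_derivative x1 t *\<^sub>R Z1 t) (at t)"
        by (rule has_vector_derivative_transform_within_open[OF dZ0[rule_format, OF t] open_I0 t]) (use Z0 in auto)
    qed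
    have dZ1: "\<forall>t\<in>I0. (Z1 has_vector_derivative (- x1 t) *\<^sub>R Tc t + x2 t *\<^sub>R Z2 t) (at t)"
    proof
      fix t assume t: "t \<in> I0"
      have "(Z1 has_vector_derivative (- x1 t) *\<^sub>R Z (\<sigma> 0) t + x2 t *\<^sub>R Z2 t) (at t)"
        using row[rule_format, OF t, of 1] F_row1 unfolding Z1_def Z2_def by simp
      then show "(Z1 has_vector_derivative (- x1 t) *\<^sub>R Tc t + x2 t *\<^sub>R Z2 t) (at t)"
        using s0 Z0 t by simp
    qed
    have dZ2: "\<forall>t\<in>I0. \<exists>D. (Z2 has_vector_derivative D) (at t)"
    proof
      fix t assume t: "t \<in> I0"
      show "\<exists>D. (Z2 has_vector_derivative D) (at t)" using row[rule_format, OF t, of 2] unfolding Z2_def by auto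
    qed
    obtain Dx where Dx0: "\<forall>t\<in>I0. Dx 0 t = x1 t"
      and Dx: "\<forall>n. \<forall>t\<in>I0. (Dx n has_vector_derivative Dx (Suc n) t) (at t)"
      using sx1 unfolding smooth_on_def by blast
    have dx1: "\<forall>t\<in>I0. (x1 has_real_derivative Dx 1 t) (at t)"
    proof
      fix t assume t: "t \<in> I0"
      have d0: "(Dx 0 has_vector_derivative Dx 1 t) (at t)" using Dx t by simp
      have "(x1 has_vector_derivative Dx 1 t) (at t)"
        by (rule has_vector_derivative_transform_within_open[OF d0 open_I0 t])
          (use Dx0 in auto)
      then show "(x1 has_real_derivative Dx 1 t) (at t)" by (simp add: has_real_derivative_iff_has_vector_derivative)
    qed
    obtain Tc' where Tc': "\<And>s. (Tc has_vector_derivative Tc' s) (at s) \<and> Tc' s \<noteq> 0" using Tc_deriv_ex by blast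
    have x1nz: "\<forall>t\<in>I0. x1 t \<noteq> 0"
    proof
      fix t assume t: "t \<in> I0"
      have "x1 t *\<^sub>R Z1 t = Tc' t" using vector_derivative_unique_at[OF dT[rule_format, OF t]] Tc' by blast
      then show "x1 t \<noteq> 0" using Tc'[of t] by auto
    qed
    have L: "Z1 s $ 3 = 0 \<and> Z2 s $ 3 = 0" if s: "s \<in> {-1/2<..<0}" for s
      by (rule side[where J="{-1/2<..<0}" and g=jl and gb=jl1 and gc=jl2 and p=4 and q=3, OF _ _ dT dZ1 dx1 x1nz])
        (use s jl_derivs jl_props Tc_left in \<open>auto simp: I0_def\<close>)
    have R: "Z1 s $ 4 = 0 \<and> Z2 s $ 4 = 0" if s: "s \<in> {0<..<1/2}" for s
      by (rule side[where J="{0<..<1/2}" and g=jr and gb=jr1 and gc=jr2 and p=3 and q=4, OF _ _ dT dZ1 dx1 x1nz])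
        (use s jr_derivs jr_props Tc_right in \<open>auto simp: I0_def\<close>)
    have I00: "(0::real) \<in> I0" by (simp add: I0_def)
    have cZ1: "isCont Z1 0" using dZ1 I00 has_vector_derivative_continuous by blast
    have cZ2: "isCont Z2 0" using dZ2 I00 has_vector_derivative_continuous by blast
    have z13: "Z1 0 $ 3 = 0" by (rule lim_left0[OF isCont_vec_nth[OF cZ1], of "-1/2"]) (use L in auto)
    have z23: "Z2 0 $ 3 = 0" by (rule lim_left0[OF isCont_vec_nth[OF cZ2], of "-1/2"]) (use L in auto)
    have z14: "Z1 0 $ 4 = 0" by (rule lim_right0[OF isCont_vec_nth[OF cZ1], of "1/2"]) (use R in auto)
    have z24: "Z2 0 $ 4 = 0" by (rule lim_right0[OF isCont_vec_nth[OF cZ2], of "1/2"]) (use R in auto)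
    have orth: "\<forall>i<4. \<forall>j<4. inner (Z i 0) (Z j 0) = (if i = j then 1 else 0)"
      using fr I00 unfolding is_frame_def by blast
    have lt: "\<sigma> 1 < 4" "\<sigma> 2 < 4" "\<sigma> 1 \<noteq> 0" "\<sigma> 2 \<noteq> 0" using s1 by auto
    have Z00: "Z 0 0 = mk4 1 0 0 0" using Z0 I00 Tc_zero by simp
    have o1: "inner (Z 0 0) (Z1 0) = 0" "inner (Z 0 0) (Z2 0) = 0" "inner (Z1 0) (Z1 0) = 1"
      "inner (Z2 0) (Z2 0) = 1" "inner (Z1 0) (Z2 0) = 0"
      using orth lt s12 unfolding Z1_def Z2_def by (auto dest: sym)
    then show False
      unfolding Z00 inner4 using z13 z23 z14 z24 by auto
  qed
qed

end
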